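(* Let $\theta\in[0,\infty]$, $\eta\in(0,1)$, gravity parameters $g_1,g_2,\ldots\ge0$, and a sequence of examples $(x_1,y_1),(x_2,y_2),\ldots$ with $x_i\in\mathbb{R}^d$, $y_i\in\mathbb{R}$. Suppose there is $C>0$ with $\|x_i\|\le C$ for all $i$, and $1-2C^2\eta\neq0$. Run the following algorithm: start with $v_1=0\in\mathbb{R}^d$; at trial $i=1,2,\ldots$, set $w_i=T_1(v_i,g_i\eta,\theta)$, predict $\hat y_i=w_i^Tx_i$, observe $y_i$, and set $v_{i+1}=w_i+2\eta(y_i-\hat y_i)x_i$. Then for every $T\ge1$ and every $\bar w\in\mathbb{R}^d$, \[ \frac{1-2C^2\eta}{T}\sum_{i=1}^T\left[(w_i^Tx_i-y_i)^2+\frac{g_i}{1-2C^2\eta}\|w_i\cdot I(|w_i|\le\theta)\|_1\right] \le \frac{\|\bar w\|^2}{2\eta T}+\frac1T\sum_{i=1}^T\Big[(\bar w^Tx_i-y_i)^2+g_{i+1}\|\bar w\cdot I(|w_{i+1}|\le\theta)\|_1\Big]. \]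
   Context: $\|\cdot\|$ is the Euclidean norm and $\|\cdot\|_1$ the $1$-norm. For $v\in\mathbb{R}^d$, $\alpha\ge0$, $\theta\in[0,\infty]$, $T_1(v,\alpha,\theta)$ is applied coordinatewise: $T_1(v_j,\alpha,\theta)=\max(0,v_j-\alpha)$ if $v_j\in[0,\theta]$, $=\min(0,v_j+\alpha)$ if $v_j\in[-\theta,0]$, and $=v_j$ otherwise. For $v,v'\in\mathbb{R}^d$, $\|v\cdot I(|v'|\le\theta)\|_1=\sum_{j=1}^d|v_j|\,I(|v'_j|\le\theta)$ with $I$ the indicator function. The vector $w_i$ is the weight vector used for prediction at trial $i$. *)

theory Defs
  imports "HOL-Analysis.Analysis"
begin

definition T1 :: "real \<Rightarrow> real \<Rightarrow> ereal \<Rightarrow> real" where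
  "T1 v \<alpha> \<theta> =
     (if 0 \<le> v \<and> ereal v \<le> \<theta> then max 0 (v - \<alpha>)
      else if v \<le> 0 \<and> ereal (- v) \<le> \<theta> then min 0 (v + \<alpha>)
      else v)"

definition T1_vec :: "real ^ 'd \<Rightarrow> real \<Rightarrow> ereal \<Rightarrow> real ^ 'd" where
  "T1_vec v \<alpha> \<theta> = (\<chi> j. T1 (v $ j) \<alpha> \<theta>)"

definition masked_l1 :: "real ^ 'd \<Rightarrow> real ^ 'd \<Rightarrow> ereal \<Rightarrow> real" where
  "masked_l1 v v' \<theta> = (\<Sum>j\<in>UNIV. \<bar>v $ j\<bar> * (if ereal \<bar>v' $ j\<bar> \<le> \<theta> then 1 else 0))"

end

theory Submission
  imports Defs
begin

lemma T1_scalar: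
  fixes a wb v :: real
  assumes a: "0 \<le> a"
  shows "(wb - T1 v a \<theta>)^2 + 2*a*(\<bar>T1 v a \<theta>\<bar> * (if ereal \<bar>T1 v a \<theta>\<bar> \<le> \<theta> then 1 else 0))
     \<le> (wb - v)^2 + 2*a*(\<bar>wb\<bar> * (if ereal \<bar>T1 v a \<theta>\<bar> \<le> \<theta> then 1 else 0))"
proof (cases "0 \<le> v \<and> ereal v \<le> \<theta>")
  case True
  hence w: "T1 v a \<theta> = max 0 (v - a)" by (simp add: T1_def)
  have "ereal \<bar>max 0 (v - a)\<bar> \<le> ereal v" using True a by auto
  hence m: "ereal \<bar>T1 v a \<theta>\<bar> \<le> \<theta>" using True w order_trans by metis
  show ?thesis
  proof (cases "a \<le> v")
    case True2: True
    have "(wb - (v - a))^2 + 2*a*\<bar>v - a\<bar> = (wb - v)^2 + 2*a*wb - a^2"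
      using True2 by (simp add: power2_eq_square algebra_simps)
    also have "\<dots> \<le> (wb - v)^2 + 2*a*\<bar>wb\<bar>" using a
    proof -
      have "a*wb \<le> a*\<bar>wb\<bar>" using a by (intro mult_left_mono) auto
      moreover have "0 \<le> a^2" by simp
      ultimately show ?thesis by linarith
    qed
    finally show ?thesis using m w True2 by simp
  next
    case False
    have "2 * v * wb \<le> 2*a*\<bar>wb\<bar>"
    proof -
      have "v * wb \<le> v * \<bar>wb\<bar>" using True by (simp add: mult_left_mono)
      also have "\<dots> \<le> a*\<bar>wb\<bar>" using False by (simp add: mult_right_mono)
      finally show ?thesis by simp
    qed
    hence "wb^2 \<le> (wb - v)^2 + 2*a*\<bar>wb\<bar>"
    proof -
      have "(wb - v)^2 = wb^2 - 2 * v * wb + v^2" by (simp add: power2_diff)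
      moreover have "0 \<le> v^2" by simp
      ultimately show ?thesis using \<open>2 * v * wb \<le> 2*a*\<bar>wb\<bar>\<close> by linarith
    qed
    thus ?thesis using m w False by simp
  qed
next
  case F1: False
  show ?thesis
  proof (cases "v \<le> 0 \<and> ereal (- v) \<le> \<theta>")
    case True
    hence w: "T1 v a \<theta> = min 0 (v + a)" using F1 unfolding T1_def by auto
    have "ereal \<bar>min 0 (v + a)\<bar> \<le> ereal (-v)" using True a by auto
    hence m: "ereal \<bar>T1 v a \<theta>\<bar> \<le> \<theta>" using True w order_trans by metis
    show ?thesis
    proof (cases "a \<le> -v")
      case True2: True
      have "(wb - (v + a))^2 + 2*a*\<bar>v + a\<bar> = (wb - v)^2 - 2*a*wb - a^2"
        using True2 by (simp add: power2_eq_square algebra_simps)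
      also have "\<dots> \<le> (wb - v)^2 + 2*a*\<bar>wb\<bar>" using a
      proof -
        have "a*(-wb) \<le> a*\<bar>wb\<bar>" using a by (intro mult_left_mono) auto
        moreover have "0 \<le> a^2" by simp
        ultimately show ?thesis by linarith
      qed
      finally show ?thesis using m w True2 by simp
    next
      case False
      have "2 * v * wb \<le> 2*a*\<bar>wb\<bar>"
      proof -
        have "(-v)*(-wb) \<le> (-v)*\<bar>wb\<bar>" using True by (intro mult_left_mono) auto
        also have "\<dots> \<le> a*\<bar>wb\<bar>" using False by (intro mult_right_mono) auto
        finally show ?thesis by simp
      qed
      hence "wb^2 \<le> (wb - v)^2 + 2*a*\<bar>wb\<bar>"
      proof -
      have "(wb - v)^2 = wb^2 - 2 * v * wb + v^2" by (simp add: power2_diff)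
      moreover have "0 \<le> v^2" by simp
      ultimately show ?thesis using \<open>2 * v * wb \<le> 2*a*\<bar>wb\<bar>\<close> by linarith
    qed
      thus ?thesis using m w False by simp
    qed
  next
    case False
    hence w: "T1 v a \<theta> = v" using F1 unfolding T1_def by auto
    have "\<not> ereal \<bar>v\<bar> \<le> \<theta>" using F1 False by (cases "0 \<le> v") auto
    thus ?thesis using w by simp
  qed
qed

lemma norm_sq_vec: "(norm (z :: real ^ 'd))^2 = (\<Sum>j\<in>UNIV. (z $ j)^2)"
  by (simp only: power2_norm_eq_inner inner_vec_def) (simp add: power2_eq_square)

lemma T1_vec_ineq:
  fixes wb v :: "real ^ 'd"
  assumes a: "0 \<le> a"
  shows "(norm (wb - T1_vec v a \<theta>))^2 + 2*a*masked_l1 (T1_vec v a \<theta>) (T1_vec v a \<theta>) \<theta>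
     \<le> (norm (wb - v))^2 + 2*a*masked_l1 wb (T1_vec v a \<theta>) \<theta>"
proof -
  have "(norm (wb - T1_vec v a \<theta>))^2 + 2*a*masked_l1 (T1_vec v a \<theta>) (T1_vec v a \<theta>) \<theta>
     = (\<Sum>j\<in>UNIV. (wb$j - T1 (v$j) a \<theta>)^2 + 2*a*(\<bar>T1 (v$j) a \<theta>\<bar> * (if ereal \<bar>T1 (v$j) a \<theta>\<bar> \<le> \<theta> then 1 else 0)))"
    by (simp add: norm_sq_vec masked_l1_def T1_vec_def sum.distrib sum_distrib_left)
  also have "\<dots> \<le> (\<Sum>j\<in>UNIV. (wb$j - v$j)^2 + 2*a*(\<bar>wb$j\<bar> * (if ereal \<bar>T1 (v$j) a \<theta>\<bar> \<le> \<theta> then 1 else 0)))"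
    by (rule sum_mono) (rule T1_scalar[OF a])
  also have "\<dots> = (norm (wb - v))^2 + 2*a*masked_l1 wb (T1_vec v a \<theta>) \<theta>"
    by (simp add: norm_sq_vec masked_l1_def T1_vec_def sum.distrib sum_distrib_left)
  finally show ?thesis .
qed

lemma masked_nonneg: "0 \<le> masked_l1 a b \<theta>"
  unfolding masked_l1_def by (rule sum_nonneg) auto

lemma grad_step:
  fixes wb w x :: "real ^ 'd"
  assumes eta: "0 < \<eta>" and xb: "norm x \<le> C"
  shows "(norm (wb - (w + (2*\<eta>*(y - w \<bullet> x)) *\<^sub>R x)))^2
     \<le> (norm (wb - w))^2 - 2*\<eta>*(1 - 2*C^2*\<eta>)*(w \<bullet> x - y)^2 + 2*\<eta>*(wb \<bullet> x - y)^2"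
proof -
  define p where "p = w \<bullet> x - y"
  define q where "q = wb \<bullet> x - y"
  have e: "wb - (w + (2*\<eta>*(y - w \<bullet> x)) *\<^sub>R x) = (wb - w) + (2*\<eta>*p) *\<^sub>R x"
    by (simp add: p_def algebra_simps)
  have i: "(wb - w) \<bullet> x = q - p" by (simp add: p_def q_def inner_diff_left)
  have "(norm ((wb - w) + (2*\<eta>*p) *\<^sub>R x))^2
      = (norm (wb - w))^2 + 2*(2*\<eta>*p)*((wb - w) \<bullet> x) + (2*\<eta>*p)^2 * (norm x)^2"
    unfolding power2_norm_eq_inner by (simp add: inner_add_left inner_add_right inner_commute algebra_simps power2_eq_square)
  also have "\<dots> = (norm (wb - w))^2 + 4*\<eta>*(p*q - p^2) + 4*\<eta>^2*p^2*(norm x)^2"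
    by (simp add: p_def q_def inner_diff_left power2_eq_square algebra_simps)
  also have "4*\<eta>^2*p^2*(norm x)^2 \<le> 4*\<eta>^2*p^2*C^2"
    using xb by (intro mult_left_mono power_mono) auto
  also have "4*\<eta>*(p*q - p^2) \<le> 2*\<eta>*(q^2 - p^2)"
  proof -
    have "0 \<le> (q - p)^2" by simp
    hence "p*q - p^2 \<le> (q^2 - p^2)/2" by (simp add: power2_diff algebra_simps)
    hence "4*\<eta>*(p*q - p^2) \<le> 4*\<eta>*((q^2 - p^2)/2)" using eta by (intro mult_left_mono) auto
    thus ?thesis by simp
  qed
  finally show ?thesis unfolding e p_def[symmetric] q_def[symmetric]
    by (simp add: power2_eq_square algebra_simps)
qed

theorem corollary1:
  fixes \<theta> :: ereal and \<eta> C :: real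
    and g :: "nat \<Rightarrow> real"
    and x :: "nat \<Rightarrow> real ^ 'd" and y :: "nat \<Rightarrow> real"
    and v w :: "nat \<Rightarrow> real ^ 'd"
    and T :: nat and wbar :: "real ^ 'd"
  assumes theta: "0 \<le> \<theta>"
    and eta: "0 < \<eta>" "\<eta> < 1"
    and grav: "\<And>i. i \<ge> 1 \<Longrightarrow> g i \<ge> 0"
    and Cpos: "C > 0"
    and xbound: "\<And>i. i \<ge> 1 \<Longrightarrow> norm (x i) \<le> C"
    and Cne: "1 - 2 * C^2 * \<eta> \<noteq> 0"
    and v1: "v 1 = 0"
    and wdef: "\<And>i. i \<ge> 1 \<Longrightarrow> w i = T1_vec (v i) (g i * \<eta>) \<theta>"
    and vstep: "\<And>i. i \<ge> 1 \<Longrightarrow> v (i + 1) = w i + (2 * \<eta> * (y i - w i \<bullet> x i)) *\<^sub>R x i"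
    and T: "T \<ge> 1"
  shows "(1 - 2 * C^2 * \<eta>) / real T *
           (\<Sum>i=1..T. (w i \<bullet> x i - y i)^2
              + g i / (1 - 2 * C^2 * \<eta>) * masked_l1 (w i) (w i) \<theta>)
         \<le> (norm wbar)^2 / (2 * \<eta> * real T)
           + 1 / real T * (\<Sum>i=1..T. (wbar \<bullet> x i - y i)^2
              + g (i + 1) * masked_l1 wbar (w (i + 1)) \<theta>)"
proof -
  define K where "K = 1 - 2 * C^2 * \<eta>"
  define D where "D i = (norm (wbar - w i))^2" for i
  define M where "M i = masked_l1 (w i) (w i) \<theta>" for i
  define P where "P i = K * (w i \<bullet> x i - y i)^2 + g i * M i" for i
  define Q where "Q i = (wbar \<bullet> x i - y i)^2 + g (i + 1) * masked_l1 wbar (w (i + 1)) \<theta>" for i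
  have w1: "w 1 = 0"
  proof -
    have "T1 0 (g 1 * \<eta>) \<theta> = 0" using theta grav[of 1] eta
      by (simp add: T1_def zero_ereal_def[symmetric])
    thus ?thesis using wdef[of 1] v1 by (simp add: T1_vec_def vec_eq_iff)
  qed
  have step: "D (i+1) + 2*\<eta>*g (i+1) * M (i+1) \<le> D i - 2*\<eta>*K*(w i \<bullet> x i - y i)^2
      + 2*\<eta>*(wbar \<bullet> x i - y i)^2 + 2*\<eta>*g (i+1)*masked_l1 wbar (w (i+1)) \<theta>" if i: "i \<ge> 1" for i
  proof -
    have a: "0 \<le> g (i+1) * \<eta>" using grav[of "i+1"] eta by simp
    have "D (i+1) + 2*(g (i+1) * \<eta>) * M (i+1) \<le> (norm (wbar - v (i+1)))^2
       + 2*(g (i+1) * \<eta>)*masked_l1 wbar (w (i+1)) \<theta>"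
    proof -
      have "w (i+1) = T1_vec (v (i+1)) (g (i+1) * \<eta>) \<theta>" using wdef by simp
      thus ?thesis using T1_vec_ineq[OF a, of wbar "v(i+1)" \<theta>] unfolding D_def M_def by simp
    qed
    moreover have "(norm (wbar - v (i+1)))^2 \<le> D i - 2*\<eta>*K*(w i \<bullet> x i - y i)^2
      + 2*\<eta>*(wbar \<bullet> x i - y i)^2"
      unfolding vstep[OF i] D_def K_def using grad_step[OF eta(1) xbound[OF i]] by simp
    ultimately show ?thesis by (simp add: algebra_simps)
  qed
  have ind: "2*\<eta>*(\<Sum>i=1..n. P i) + D (n+1) + 2*\<eta>*g (n+1) * M (n+1)
     \<le> (norm wbar)^2 + 2*\<eta>*(\<Sum>i=1..n. Q i)" for n
  proof (induction n)
    case 0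
    have "w (Suc 0) = 0" using w1 by simp
    moreover hence "M 1 = 0" by (simp add: M_def masked_l1_def)
    ultimately show ?case by (simp add: D_def)
  next
    case (Suc n)
    have s: "D (n+2) + 2*\<eta>*g (n+2) * M (n+2) \<le> D (n+1) - 2*\<eta>*K*(w (n+1) \<bullet> x (n+1) - y (n+1))^2
      + 2*\<eta>*(wbar \<bullet> x (n+1) - y (n+1))^2 + 2*\<eta>*g (n+2)*masked_l1 wbar (w (n+2)) \<theta>"
      using step[of "n+1"] by (simp add: add.assoc)
    have "(\<Sum>i=1..Suc n. P i) = (\<Sum>i=1..n. P i) + P (n+1)" by simp
    moreover have "(\<Sum>i=1..Suc n. Q i) = (\<Sum>i=1..n. Q i) + Q (n+1)" by simp
    ultimately show ?case using Suc s unfolding P_def Q_def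
      by (simp add: algebra_simps numeral_2_eq_2)
  qed
  have "0 \<le> D (T+1)" by (simp add: D_def)
  moreover have "0 \<le> g (T+1) * M (T+1)" using grav[of "T+1"] by (simp add: M_def masked_nonneg)
  ultimately have main: "2*\<eta>*(\<Sum>i=1..T. P i) \<le> (norm wbar)^2 + 2*\<eta>*(\<Sum>i=1..T. Q i)"
  proof -
    have "0 \<le> 2*\<eta>*(g (T+1) * M (T+1))" using eta \<open>0 \<le> g (T+1) * M (T+1)\<close> by simp
    thus ?thesis using ind[of T] \<open>0 \<le> D (T+1)\<close> by (simp add: algebra_simps)
  qed
  have Tp: "0 < real T" using T by simp
  have "(\<Sum>i=1..T. P i) \<le> (norm wbar)^2 / (2*\<eta>) + (\<Sum>i=1..T. Q i)"
    using main eta by (simp add: field_simps)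
  hence A: "(\<Sum>i=1..T. P i) / real T \<le> ((norm wbar)^2 / (2*\<eta>) + (\<Sum>i=1..T. Q i)) / real T"
    using Tp by (simp add: divide_right_mono)
  have B: "(1 - 2 * C^2 * \<eta>) / real T *
           (\<Sum>i=1..T. (w i \<bullet> x i - y i)^2
              + g i / (1 - 2 * C^2 * \<eta>) * masked_l1 (w i) (w i) \<theta>) = (\<Sum>i=1..T. P i) / real T"
  proof -
    have "(1 - 2 * C^2 * \<eta>) * (\<Sum>i=1..T. (w i \<bullet> x i - y i)^2
              + g i / (1 - 2 * C^2 * \<eta>) * masked_l1 (w i) (w i) \<theta>) = (\<Sum>i=1..T. P i)"
      unfolding sum_distrib_left
    proof (rule sum.cong[OF refl])
      fix i
      have "K * (g i / K * M i) = g i * M i" using Cne by (simp add: K_def)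
      thus "(1 - 2 * C^2 * \<eta>) * ((w i \<bullet> x i - y i)^2
              + g i / (1 - 2 * C^2 * \<eta>) * masked_l1 (w i) (w i) \<theta>) = P i"
        unfolding P_def by (simp add: distrib_left K_def M_def)
    qed
    thus ?thesis by simp
  qed
  have Ceq: "((norm wbar)^2 / (2*\<eta>) + (\<Sum>i=1..T. Q i)) / real T =
      (norm wbar)^2 / (2 * \<eta> * real T) + 1 / real T * (\<Sum>i=1..T. (wbar \<bullet> x i - y i)^2
              + g (i + 1) * masked_l1 wbar (w (i + 1)) \<theta>)"
    unfolding Q_def add_divide_distrib by (simp add: divide_divide_eq_left mult_ac)
  show ?thesis unfolding B Ceq[symmetric] by (rule A)
qed

end
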